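(* Let $(A,\gamma)$ be a quasiordered set and let $\{\alpha_i\mid i\in I\}$ be a half-space realizer of $\gamma$ with $|I|\ge2$. Then there exists a family $(R_i)_{i\in I}$, indexed by the same set $I$, of linear extensions of the induced partial order $r_\gamma$ on $A/(\gamma\cap\gamma^{-1})$ such that $\bigcap_{i\in I}R_i=r_\gamma$.
   Context: A quasiorder on $A$ is a reflexive and transitive relation; $\Delta_A=\{(a,a)\mid a\in A\}$. A quasiorder $\alpha$ on $A$ is a half-space if there is a quasiorder $\beta$ on $A$ with $\alpha\cup\beta=A\times A$ and $\alpha\cap\beta=\Delta_A$. A half-space realizer of a quasiorder $\gamma$ on $A$ is a set $\{\alpha_i\mid i\in I\}$ of half-spaces on $A$ with $\bigcap_{i\in I}\alpha_i=\gamma$. For a quasiorder $\gamma$, $r_\gamma$ is the induced partial order on $A/(\gamma\cap\gamma^{-1})$: $([a],[b])\in r_\gamma$ iff $(a,b)\in\gamma$. *)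

theory Defs
  imports Main
begin

definition quasiorder_on :: "'a set \<Rightarrow> 'a rel \<Rightarrow> bool" where
  "quasiorder_on A r \<longleftrightarrow> r \<subseteq> A \<times> A \<and> (\<forall>a\<in>A. (a, a) \<in> r) \<and> trans r"

definition half_space :: "'a set \<Rightarrow> 'a rel \<Rightarrow> bool" where
  "half_space A \<alpha> \<longleftrightarrow> quasiorder_on A \<alpha> \<and>
     (\<exists>\<beta>. quasiorder_on A \<beta> \<and> \<alpha> \<union> \<beta> = A \<times> A \<and> \<alpha> \<inter> \<beta> = Id_on A)"

definition half_space_realizer :: "'a set \<Rightarrow> 'a rel \<Rightarrow> 'i set \<Rightarrow> ('i \<Rightarrow> 'a rel) \<Rightarrow> bool" where
  "half_space_realizer A \<gamma> I \<alpha> \<longleftrightarrow> (\<forall>i\<in>I. half_space A (\<alpha> i)) \<and> (\<Inter>i\<in>I. \<alpha> i) = \<gamma>"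

definition induced_order :: "'a set \<Rightarrow> 'a rel \<Rightarrow> 'a set rel" where
  "induced_order A \<gamma> = {(X, Y). X \<in> A // (\<gamma> \<inter> \<gamma>\<inverse>) \<and> Y \<in> A // (\<gamma> \<inter> \<gamma>\<inverse>) \<and>
      (\<exists>a\<in>X. \<exists>b\<in>Y. (a, b) \<in> \<gamma>)}"

definition linear_order_on' :: "'b set \<Rightarrow> 'b rel \<Rightarrow> bool" where
  "linear_order_on' B R \<longleftrightarrow> R \<subseteq> B \<times> B \<and> (\<forall>x\<in>B. (x, x) \<in> R) \<and> trans R \<and> antisym R \<and>
     (\<forall>x\<in>B. \<forall>y\<in>B. (x, y) \<in> R \<or> (y, x) \<in> R)"

definition linear_extension :: "'b set \<Rightarrow> 'b rel \<Rightarrow> 'b rel \<Rightarrow> bool" where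
  "linear_extension B r R \<longleftrightarrow> linear_order_on' B R \<and> r \<subseteq> R"

end

theory Submission
  imports Defs
begin

lemma szpilrajn:
  assumes "r \<subseteq> B \<times> B" "\<forall>x\<in>B. (x,x) \<in> r" "trans r" "antisym r"
  shows "\<exists>R. linear_order_on' B R \<and> r \<subseteq> R"
proof -
  let ?S = "{R. r \<subseteq> R \<and> R \<subseteq> B \<times> B \<and> trans R \<and> antisym R}"
  have "\<exists>M\<in>?S. \<forall>X\<in>?S. M \<subseteq> X \<longrightarrow> X = M"
  proof (rule subset_Zorn_nonempty)
    show "?S \<noteq> {}" using assms by blast
  next
    fix C assume C: "C \<noteq> {}" "subset.chain ?S C"
    then have sub: "C \<subseteq> ?S" and ch: "\<forall>X\<in>C. \<forall>Y\<in>C. X \<subseteq> Y \<or> Y \<subseteq> X"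
      by (auto simp: subset_chain_def)
    have "r \<subseteq> \<Union>C" using C sub by blast
    moreover have "\<Union>C \<subseteq> B \<times> B" using sub by blast
    moreover have "trans (\<Union>C)"
    proof (rule transI)
      fix x y z assume "(x,y) \<in> \<Union>C" "(y,z) \<in> \<Union>C"
      then obtain X Y where XY: "X \<in> C" "Y \<in> C" "(x,y) \<in> X" "(y,z) \<in> Y" by blast
      show "(x,z) \<in> \<Union>C"
      proof (cases "X \<subseteq> Y")
        case True
        have tY: "trans Y" using sub XY(2) by blast
        have "(x,y) \<in> Y" using True XY(3) by blast
        then have "(x,z) \<in> Y" using XY(4) tY by (meson transD)
        then show ?thesis using XY by blast
      next
        case False
        then have "Y \<subseteq> X" using ch XY by blast
        have tX: "trans X" using sub XY(1) by blast
        have "(y,z) \<in> X" using \<open>Y \<subseteq> X\<close> XY(4) by blast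
        then have "(x,z) \<in> X" using XY(3) tX by (meson transD)
        then show ?thesis using XY by blast
      qed
    qed
    moreover have "antisym (\<Union>C)"
    proof (rule antisymI)
      fix x y assume "(x,y) \<in> \<Union>C" "(y,x) \<in> \<Union>C"
      then obtain X Y where XY: "X \<in> C" "Y \<in> C" "(x,y) \<in> X" "(y,x) \<in> Y" by blast
      show "x = y"
      proof (cases "X \<subseteq> Y")
        case True
        have tY: "antisym Y" using sub XY(2) by blast
        have "(x,y) \<in> Y" using True XY(3) by blast
        then show ?thesis using XY(4) tY by (blast dest: antisymD)
      next
        case False
        then have "Y \<subseteq> X" using ch XY by blast
        have tX: "antisym X" using sub XY(1) by blast
        have "(y,x) \<in> X" using \<open>Y \<subseteq> X\<close> XY(4) by blast
        then show ?thesis using XY(3) tX by (blast dest: antisymD)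
      qed
    qed
    ultimately show "\<Union>C \<in> ?S" by blast
  qed
  then obtain M where M: "r \<subseteq> M" "M \<subseteq> B \<times> B" "trans M" "antisym M"
    and max: "\<forall>X\<in>?S. M \<subseteq> X \<longrightarrow> X = M" by blast
  have tot: "(x,y) \<in> M \<or> (y,x) \<in> M" if xy: "x \<in> B" "y \<in> B" for x y
  proof (rule ccontr)
    assume nn: "\<not> ((x,y) \<in> M \<or> (y,x) \<in> M)"
    define M' where "M' = M \<union> {(u,v). (u,x) \<in> M \<and> (y,v) \<in> M}"
    have "M' \<in> ?S"
    proof -
      have "r \<subseteq> M'" using M unfolding M'_def by blast
      moreover have "M' \<subseteq> B \<times> B" using M unfolding M'_def by blast
      moreover have "trans M'"
      proof (rule transI)
        fix u v w assume uv: "(u,v) \<in> M'" and vw: "(v,w) \<in> M'"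
        show "(u,w) \<in> M'"
        proof (cases "(u,v) \<in> M")
          case uvM: True
          show ?thesis
          proof (cases "(v,w) \<in> M")
            case True then show ?thesis using uvM M(3) unfolding M'_def by (blast dest: transD)
          next
            case False then have "(v,x) \<in> M" "(y,w) \<in> M" using vw unfolding M'_def by auto
            then show ?thesis using uvM M(3) unfolding M'_def by (blast dest: transD)
          qed
        next
          case False then have ux: "(u,x) \<in> M" "(y,v) \<in> M" using uv unfolding M'_def by auto
          show ?thesis
          proof (cases "(v,w) \<in> M")
            case True then show ?thesis using ux M(3) unfolding M'_def by (blast dest: transD)
          next
            case False then have "(v,x) \<in> M" using vw unfolding M'_def by auto
            then have "(y,x) \<in> M" using ux M(3) by (blast dest: transD)
            then show ?thesis using nn by blast
          qed
        qed
      qed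
      moreover have "antisym M'"
      proof (rule antisymI)
        fix u v assume uv: "(u,v) \<in> M'" and vu: "(v,u) \<in> M'"
        show "u = v"
        proof (cases "(u,v) \<in> M")
          case uvM: True
          show ?thesis
          proof (cases "(v,u) \<in> M")
            case True then show ?thesis using uvM M(4) by (blast dest: antisymD)
          next
            case False then have "(v,x) \<in> M" "(y,u) \<in> M" using vu unfolding M'_def by auto
            then have "(y,x) \<in> M" using uvM M(3) by (blast dest: transD)
            then show ?thesis using nn by blast
          qed
        next
          case False then have ux: "(u,x) \<in> M" "(y,v) \<in> M" using uv unfolding M'_def by auto
          show ?thesis
          proof (cases "(v,u) \<in> M")
            case True 
            then have "(y,x) \<in> M" using ux M(3) by (blast dest: transD)
            then show ?thesis using nn by blast
          next
            case False then have "(v,x) \<in> M" using vu unfolding M'_def by auto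
            then have "(y,x) \<in> M" using ux M(3) by (blast dest: transD)
            then show ?thesis using nn by blast
          qed
        qed
      qed
      ultimately show ?thesis by blast
    qed
    moreover have "M \<subseteq> M'" unfolding M'_def by blast
    moreover have "(x,y) \<in> M'" using xy assms(2) M(1) unfolding M'_def by blast
    ultimately show False using max nn by blast
  qed
  have "linear_order_on' B M"
    unfolding linear_order_on'_def using M tot assms(2) by blast
  then show ?thesis using M by blast
qed


definition tpo :: "'a set \<Rightarrow> 'a rel \<Rightarrow> bool" where
  "tpo A R \<longleftrightarrow> R \<subseteq> A \<times> A \<and> trans R \<and> (\<forall>a\<in>A. \<forall>b\<in>A. (a,b) \<in> R \<or> (b,a) \<in> R)"

definition Qr :: "'a set \<Rightarrow> 'a rel \<Rightarrow> 'a rel" where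
  "Qr A \<alpha> = {(a,b). a \<in> A \<and> b \<in> A \<and> ((a,b) \<in> \<alpha> \<or> (b,a) \<notin> \<alpha>)}"

definition lexr :: "'a rel \<Rightarrow> 'a rel \<Rightarrow> 'a rel" where
  "lexr Q M = {(a,b). (a,b) \<in> Q \<and> ((b,a) \<in> Q \<longrightarrow> (a,b) \<in> M)}"

definition sel :: "'a rel \<Rightarrow> 'a rel \<Rightarrow> 'a rel \<Rightarrow> 'a rel" where
  "sel \<alpha> X Y = {(a,b). if (a,b) \<in> \<alpha> then (a,b) \<in> X else (a,b) \<in> Y}"

lemma hs_facts:
  assumes "half_space A \<alpha>"
  shows "\<alpha> \<subseteq> A \<times> A" "\<And>a. a \<in> A \<Longrightarrow> (a,a) \<in> \<alpha>" "trans \<alpha>"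
    "\<And>a b c. a \<in> A \<Longrightarrow> b \<in> A \<Longrightarrow> c \<in> A \<Longrightarrow> (a,b) \<notin> \<alpha> \<Longrightarrow> (b,c) \<notin> \<alpha> \<Longrightarrow> a \<noteq> c \<Longrightarrow> (a,c) \<notin> \<alpha>"
proof -
  show "\<alpha> \<subseteq> A \<times> A" "\<And>a. a \<in> A \<Longrightarrow> (a,a) \<in> \<alpha>" "trans \<alpha>"
    using assms unfolding half_space_def quasiorder_on_def by auto
  fix a b c assume abc: "a \<in> A" "b \<in> A" "c \<in> A" "(a,b) \<notin> \<alpha>" "(b,c) \<notin> \<alpha>" "a \<noteq> c"
  obtain \<beta> where b: "quasiorder_on A \<beta>" "\<alpha> \<union> \<beta> = A \<times> A" "\<alpha> \<inter> \<beta> = Id_on A"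
    using assms unfolding half_space_def by blast
  have "(a,b) \<in> \<beta>" "(b,c) \<in> \<beta>" using abc b(2) by blast+
  then have "(a,c) \<in> \<beta>" using b(1) unfolding quasiorder_on_def by (blast dest: transD)
  show "(a,c) \<notin> \<alpha>"
  proof
    assume "(a,c) \<in> \<alpha>"
    then have "(a,c) \<in> \<alpha> \<inter> \<beta>" using \<open>(a,c) \<in> \<beta>\<close> by blast
    then have "(a,c) \<in> Id_on A" using b(3) by simp
    then show False using abc(6) by (simp add: Id_on_iff)
  qed
qed

lemma tpo_refl: "tpo A R \<Longrightarrow> a \<in> A \<Longrightarrow> (a,a) \<in> R"
  unfolding tpo_def by blast

lemma tpo_conv: "tpo A R \<Longrightarrow> tpo A (R\<inverse>)"
  unfolding tpo_def trans_def by blast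

lemma tpo_lex: assumes "tpo A Q" "tpo A M" shows "tpo A (lexr Q M)"
proof -
  have "trans (lexr Q M)"
  proof (rule transI)
    fix a b c assume ab: "(a,b) \<in> lexr Q M" and bc: "(b,c) \<in> lexr Q M"
    have q: "(a,b) \<in> Q" "(b,c) \<in> Q" using ab bc unfolding lexr_def by auto
    have "(a,c) \<in> Q" using q assms(1) unfolding tpo_def by (blast dest: transD)
    moreover have "(a,c) \<in> M" if ca: "(c,a) \<in> Q"
    proof -
      have "(b,a) \<in> Q" "(c,b) \<in> Q" using q ca assms(1) unfolding tpo_def by (blast dest: transD)+
      then have "(a,b) \<in> M" "(b,c) \<in> M" using ab bc unfolding lexr_def by auto
      then show ?thesis using assms(2) unfolding tpo_def by (blast dest: transD)
    qed
    ultimately show "(a,c) \<in> lexr Q M" unfolding lexr_def by blast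
  qed
  then show ?thesis using assms unfolding tpo_def lexr_def by blast
qed

lemma tpo_Q: assumes "half_space A \<alpha>" shows "tpo A (Qr A \<alpha>)"
proof -
  note h = hs_facts[OF assms]
  have "trans (Qr A \<alpha>)"
  proof (rule transI)
    fix a b c assume ab: "(a,b) \<in> Qr A \<alpha>" and bc: "(b,c) \<in> Qr A \<alpha>"
    then have A: "a \<in> A" "b \<in> A" "c \<in> A" unfolding Qr_def by auto
    show "(a,c) \<in> Qr A \<alpha>"
    proof (rule ccontr)
      assume "(a,c) \<notin> Qr A \<alpha>"
      then have n: "(a,c) \<notin> \<alpha>" "(c,a) \<in> \<alpha>" using A unfolding Qr_def by auto
      then have ac: "a \<noteq> c" using h(2) A by blast
      show False
      proof (cases "(a,b) \<in> \<alpha>")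
        case True
        then have "(c,b) \<in> \<alpha>" using n h(3) by (blast dest: transD)
        then have "(b,c) \<in> \<alpha>" using bc unfolding Qr_def by auto
        then show False using True n h(3) by (blast dest: transD)
      next
        case False
        then have "(b,a) \<notin> \<alpha>" using ab unfolding Qr_def by auto
        show False
        proof (cases "(b,c) \<in> \<alpha>")
          case True
          then have "(b,a) \<in> \<alpha>" using n h(3) by (blast dest: transD)
          then show False using \<open>(b,a) \<notin> \<alpha>\<close> by blast
        next
          case False
          then have "(c,b) \<notin> \<alpha>" using bc unfolding Qr_def by auto
          have "(c,a) \<notin> \<alpha>"
            using h(4)[OF A(3) A(2) A(1) \<open>(c,b) \<notin> \<alpha>\<close> \<open>(b,a) \<notin> \<alpha>\<close>] ac by blast
          then show False using n by blast
        qed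
      qed
    qed
  qed
  then show ?thesis unfolding tpo_def Qr_def by auto
qed

lemma tpo_lex_sel:
  assumes hs: "half_space A \<alpha>" and X: "tpo A X" and Y: "tpo A Y"
  shows "tpo A (lexr (Qr A \<alpha>) (sel \<alpha> X Y))"
proof -
  note h = hs_facts[OF hs]
  let ?Q = "Qr A \<alpha>" and ?S = "sel \<alpha> X Y"
  have Q: "tpo A ?Q" by (rule tpo_Q[OF hs])
  have "trans (lexr ?Q ?S)"
  proof (rule transI)
    fix a b c assume ab: "(a,b) \<in> lexr ?Q ?S" and bc: "(b,c) \<in> lexr ?Q ?S"
    have q: "(a,b) \<in> ?Q" "(b,c) \<in> ?Q" using ab bc unfolding lexr_def by auto
    then have A: "a \<in> A" "b \<in> A" "c \<in> A" unfolding Qr_def by auto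
    have "(a,c) \<in> ?Q" using q Q unfolding tpo_def by (blast dest: transD)
    moreover have "(a,c) \<in> ?S" if ca: "(c,a) \<in> ?Q"
    proof -
      have q2: "(b,a) \<in> ?Q" "(c,b) \<in> ?Q" using q ca Q unfolding tpo_def by (blast dest: transD)+
      then have s: "(a,b) \<in> ?S" "(b,c) \<in> ?S" using ab bc unfolding lexr_def by auto
      show ?thesis
      proof (cases "a = b \<or> b = c")
        case True then show ?thesis using s by auto
      next
        case False
        show ?thesis
        proof (cases "a = c")
          case True then show ?thesis using X A h(2) unfolding sel_def tpo_def by auto
        next
          case ac: False
          have e1: "(a,b) \<in> \<alpha> \<longleftrightarrow> (b,a) \<in> \<alpha>" using q(1) q2(1) unfolding Qr_def by auto
          have e2: "(b,c) \<in> \<alpha> \<longleftrightarrow> (c,b) \<in> \<alpha>" using q(2) q2(2) unfolding Qr_def by auto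
          have e3: "(a,c) \<in> \<alpha> \<longleftrightarrow> (c,a) \<in> \<alpha>" using \<open>(a,c) \<in> ?Q\<close> ca unfolding Qr_def by auto
          have hom1: "(a,b) \<in> \<alpha> \<longleftrightarrow> (b,c) \<in> \<alpha>"
          proof
            assume "(a,b) \<in> \<alpha>"
            show "(b,c) \<in> \<alpha>"
            proof (rule ccontr)
              assume n: "(b,c) \<notin> \<alpha>"
              have "(a,c) \<notin> \<alpha>" using n e1 \<open>(a,b) \<in> \<alpha>\<close> h(3) by (blast dest: transD)
              then have "(a,b) \<notin> \<alpha>" using h(4)[OF A(1) A(3) A(2)] n e2 False by blast
              then show False using \<open>(a,b) \<in> \<alpha>\<close> by blast
            qed
          next
            assume "(b,c) \<in> \<alpha>"
            show "(a,b) \<in> \<alpha>"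
            proof (rule ccontr)
              assume n: "(a,b) \<notin> \<alpha>"
              have "(a,c) \<notin> \<alpha>" using n e2 \<open>(b,c) \<in> \<alpha>\<close> h(3) by (blast dest: transD)
              then have "(c,b) \<notin> \<alpha>" using h(4)[OF A(3) A(1) A(2)] n e3 False by blast
              then show False using \<open>(b,c) \<in> \<alpha>\<close> e2 by blast
            qed
          qed
          have hom2: "(a,c) \<in> \<alpha> \<longleftrightarrow> (a,b) \<in> \<alpha>"
            using hom1 e1 e2 h(3) h(4)[OF A(1) A(2) A(3)] ac by (blast dest: transD)
          show ?thesis
          proof (cases "(a,b) \<in> \<alpha>")
            case True
            then have "(a,b) \<in> X" "(b,c) \<in> X" using s hom1 unfolding sel_def by auto
            then show ?thesis using True hom2 X unfolding sel_def tpo_def by (auto dest: transD)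
          next
            case False
            then have "(a,b) \<in> Y" "(b,c) \<in> Y" using s hom1 unfolding sel_def by auto
            then show ?thesis using False hom2 Y unfolding sel_def tpo_def by (auto dest: transD)
          qed
        qed
      qed
    qed
    ultimately show "(a,c) \<in> lexr ?Q ?S" unfolding lexr_def by blast
  qed
  moreover have "lexr ?Q ?S \<subseteq> A \<times> A" unfolding lexr_def Qr_def by auto
  moreover have "(a,b) \<in> lexr ?Q ?S \<or> (b,a) \<in> lexr ?Q ?S" if "a \<in> A" "b \<in> A" for a b
    using that X Y unfolding lexr_def Qr_def sel_def tpo_def by auto
  ultimately show ?thesis unfolding tpo_def by blast
qed


lemma eqv: "quasiorder_on A \<gamma> \<Longrightarrow> equiv A (\<gamma> \<inter> \<gamma>\<inverse>)"
  unfolding quasiorder_on_def equiv_def refl_on_def sym_def trans_def by blast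

lemma in_class_iff:
  assumes "quasiorder_on A \<gamma>" "X \<in> A // (\<gamma> \<inter> \<gamma>\<inverse>)" "a \<in> A"
  shows "a \<in> X \<longleftrightarrow> X = (\<gamma> \<inter> \<gamma>\<inverse>) `` {a}"
proof -
  note e = eqv[OF assms(1)]
  obtain x where x: "x \<in> A" "X = (\<gamma> \<inter> \<gamma>\<inverse>) `` {x}" using assms(2) by (blast elim: quotientE)
  show ?thesis using x e assms(3) eq_equiv_class_iff[OF e x(1) assms(3)] by auto
qed

lemma class_eq_iff:
  assumes "quasiorder_on A \<gamma>" "a \<in> A" "b \<in> A"
  shows "(\<gamma> \<inter> \<gamma>\<inverse>) `` {a} = (\<gamma> \<inter> \<gamma>\<inverse>) `` {b} \<longleftrightarrow> (a,b) \<in> \<gamma> \<and> (b,a) \<in> \<gamma>"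
  using eq_equiv_class_iff[OF eqv[OF assms(1)] assms(2,3)] by auto

lemma induced_iff:
  assumes q: "quasiorder_on A \<gamma>" "a \<in> A" "b \<in> A"
  shows "((\<gamma> \<inter> \<gamma>\<inverse>) `` {a}, (\<gamma> \<inter> \<gamma>\<inverse>) `` {b}) \<in> induced_order A \<gamma> \<longleftrightarrow> (a,b) \<in> \<gamma>"
proof
  assume "(a,b) \<in> \<gamma>"
  moreover have "a \<in> (\<gamma> \<inter> \<gamma>\<inverse>) `` {a}" "b \<in> (\<gamma> \<inter> \<gamma>\<inverse>) `` {b}"
    using q unfolding quasiorder_on_def by auto
  ultimately show "((\<gamma> \<inter> \<gamma>\<inverse>) `` {a}, (\<gamma> \<inter> \<gamma>\<inverse>) `` {b}) \<in> induced_order A \<gamma>"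
    unfolding induced_order_def using q by (blast intro: quotientI)
next
  assume "((\<gamma> \<inter> \<gamma>\<inverse>) `` {a}, (\<gamma> \<inter> \<gamma>\<inverse>) `` {b}) \<in> induced_order A \<gamma>"
  then obtain a' b' where "(a,a') \<in> \<gamma>" "(b,b') \<in> \<gamma>\<inverse>" "(a',b') \<in> \<gamma>"
    unfolding induced_order_def by blast
  then show "(a,b) \<in> \<gamma>" using q unfolding quasiorder_on_def by (blast dest: transD)
qed

lemma induced_cases:
  assumes q: "quasiorder_on A \<gamma>" and XY: "(X,Y) \<in> induced_order A \<gamma>"
  obtains a b where "a \<in> A" "b \<in> A" "X = (\<gamma> \<inter> \<gamma>\<inverse>) `` {a}" "Y = (\<gamma> \<inter> \<gamma>\<inverse>) `` {b}" "(a,b) \<in> \<gamma>"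
proof -
  obtain a b where ab: "X \<in> A // (\<gamma> \<inter> \<gamma>\<inverse>)" "Y \<in> A // (\<gamma> \<inter> \<gamma>\<inverse>)" "a \<in> X" "b \<in> Y" "(a,b) \<in> \<gamma>"
    using XY unfolding induced_order_def by blast
  then have "a \<in> A" "b \<in> A" using q unfolding quasiorder_on_def by auto
  then show ?thesis using that ab in_class_iff[OF q] by metis
qed

lemma lift:
  assumes q: "quasiorder_on A \<gamma>" and P: "tpo A P" "\<gamma> \<subseteq> P"
    and anti: "\<And>a b. (a,b) \<in> P \<Longrightarrow> (b,a) \<in> P \<Longrightarrow> (a,b) \<in> \<gamma>"
  shows "\<exists>R. linear_extension (A // (\<gamma> \<inter> \<gamma>\<inverse>)) (induced_order A \<gamma>) R \<and>
     (\<forall>a\<in>A. \<forall>b\<in>A. (a,b) \<notin> P \<longrightarrow> ((\<gamma> \<inter> \<gamma>\<inverse>) `` {a}, (\<gamma> \<inter> \<gamma>\<inverse>) `` {b}) \<notin> R)"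
proof -
  define E where "E = \<gamma> \<inter> \<gamma>\<inverse>"
  define R where "R = {(E``{a}, E``{b}) | a b. (a,b) \<in> P}"
  have PA: "P \<subseteq> A \<times> A" "trans P" using P unfolding tpo_def by auto
  have cls: "E``{a} = E``{b} \<longleftrightarrow> (a,b) \<in> \<gamma> \<and> (b,a) \<in> \<gamma>" if "a \<in> A" "b \<in> A" for a b
    using class_eq_iff[OF q that] unfolding E_def .
  have memR: "(E``{a}, E``{b}) \<in> R \<longleftrightarrow> (a,b) \<in> P" if ab: "a \<in> A" "b \<in> A" for a b
  proof
    assume "(E``{a}, E``{b}) \<in> R"
    then obtain a' b' where "(a',b') \<in> P" "E``{a} = E``{a'}" "E``{b} = E``{b'}" unfolding R_def by blast
    moreover have "a' \<in> A" "b' \<in> A" using calculation(1) PA by auto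
    ultimately have "(a,a') \<in> P" "(a',b') \<in> P" "(b',b) \<in> P" using cls ab P(2) by auto
    then show "(a,b) \<in> P" using PA(2) by (blast dest: transD)
  qed (auto simp: R_def)
  have Rsub: "R \<subseteq> (A // E) \<times> (A // E)" unfolding R_def using PA(1) by (auto intro: quotientI)
  have Rcases: "\<exists>a b. a \<in> A \<and> b \<in> A \<and> X = E``{a} \<and> Y = E``{b}" if "(X,Y) \<in> R" for X Y
    using that PA(1) unfolding R_def by blast
  have lin: "linear_order_on' (A // E) R"
    unfolding linear_order_on'_def
  proof (intro conjI)
    show "R \<subseteq> A // E \<times> A // E" by (rule Rsub)
    show "\<forall>x\<in>A // E. (x, x) \<in> R"
      using memR tpo_refl[OF P(1)] by (auto elim!: quotientE)
    show "trans R"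
    proof (rule transI)
      fix X Y Z assume XY: "(X,Y) \<in> R" and YZ: "(Y,Z) \<in> R"
      then obtain a b b' c where "a \<in> A" "b \<in> A" "b' \<in> A" "c \<in> A" "X = E``{a}" "Y = E``{b}" "Y = E``{b'}" "Z = E``{c}"
        using Rcases by metis
      then show "(X,Z) \<in> R" using XY YZ memR PA(2) by (metis transD)
    qed
    show "antisym R"
    proof (rule antisymI)
      fix X Y assume XY: "(X,Y) \<in> R" and YX: "(Y,X) \<in> R"
      then obtain a b where ab: "a \<in> A" "b \<in> A" "X = E``{a}" "Y = E``{b}"
        using Rcases by metis
      then have "(a,b) \<in> P" "(b,a) \<in> P" using XY YX memR by auto
      then show "X = Y" using anti ab cls by auto
    qed
    show "\<forall>x\<in>A // E. \<forall>y\<in>A // E. (x, y) \<in> R \<or> (y, x) \<in> R"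
    proof (intro ballI)
      fix X Y assume "X \<in> A // E" "Y \<in> A // E"
      then obtain a b where ab: "a \<in> A" "b \<in> A" "X = E``{a}" "Y = E``{b}" by (metis quotientE)
      have "(a,b) \<in> P \<or> (b,a) \<in> P" using P(1) ab unfolding tpo_def by blast
      then show "(X, Y) \<in> R \<or> (Y, X) \<in> R" using memR ab by auto
    qed
  qed
  have ext: "induced_order A \<gamma> \<subseteq> R"
  proof
    fix XY assume "XY \<in> induced_order A \<gamma>"
    then obtain X Y where XY: "XY = (X,Y)" "(X,Y) \<in> induced_order A \<gamma>" by (cases XY) auto
    then obtain a b where "a \<in> A" "b \<in> A" "X = E``{a}" "Y = E``{b}" "(a,b) \<in> \<gamma>"
      using induced_cases[OF q] unfolding E_def by metis
    then show "XY \<in> R" using XY memR P(2) by auto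
  qed
  show ?thesis
    using lin ext memR unfolding linear_extension_def E_def by auto
qed

lemma induced_po:
  assumes q: "quasiorder_on A \<gamma>"
  shows "induced_order A \<gamma> \<subseteq> (A // (\<gamma> \<inter> \<gamma>\<inverse>)) \<times> (A // (\<gamma> \<inter> \<gamma>\<inverse>))"
    "\<forall>x\<in>A // (\<gamma> \<inter> \<gamma>\<inverse>). (x,x) \<in> induced_order A \<gamma>"
    "trans (induced_order A \<gamma>)" "antisym (induced_order A \<gamma>)"
proof -
  define E where "E = \<gamma> \<inter> \<gamma>\<inverse>"
  have tr: "trans \<gamma>" and rf: "\<And>a. a \<in> A \<Longrightarrow> (a,a) \<in> \<gamma>" using q unfolding quasiorder_on_def by auto
  show "induced_order A \<gamma> \<subseteq> (A // (\<gamma> \<inter> \<gamma>\<inverse>)) \<times> (A // (\<gamma> \<inter> \<gamma>\<inverse>))"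
    unfolding induced_order_def by auto
  show "\<forall>x\<in>A // (\<gamma> \<inter> \<gamma>\<inverse>). (x,x) \<in> induced_order A \<gamma>"
    using induced_iff[OF q] rf by (auto elim!: quotientE)
  show "trans (induced_order A \<gamma>)"
  proof (rule transI)
    fix X Y Z assume XY: "(X,Y) \<in> induced_order A \<gamma>" and YZ: "(Y,Z) \<in> induced_order A \<gamma>"
    obtain a b where ab: "a \<in> A" "b \<in> A" "X = E``{a}" "Y = E``{b}" "(a,b) \<in> \<gamma>"
      using induced_cases[OF q XY] unfolding E_def by metis
    obtain b' c where bc: "b' \<in> A" "c \<in> A" "Y = E``{b'}" "Z = E``{c}" "(b',c) \<in> \<gamma>"
      using induced_cases[OF q YZ] unfolding E_def by metis
    have "(b,b') \<in> \<gamma>" using class_eq_iff[OF q ab(2) bc(1)] ab(4) bc(3) unfolding E_def by auto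
    then have "(a,c) \<in> \<gamma>" using ab(5) bc(5) tr by (blast dest: transD)
    then show "(X,Z) \<in> induced_order A \<gamma>" using induced_iff[OF q ab(1) bc(2)] ab bc unfolding E_def by auto
  qed
  show "antisym (induced_order A \<gamma>)"
  proof (rule antisymI)
    fix X Y assume XY: "(X,Y) \<in> induced_order A \<gamma>" and YX: "(Y,X) \<in> induced_order A \<gamma>"
    obtain a b where ab: "a \<in> A" "b \<in> A" "X = E``{a}" "Y = E``{b}" "(a,b) \<in> \<gamma>"
      using induced_cases[OF q XY] unfolding E_def by metis
    have "(b,a) \<in> \<gamma>" using YX induced_iff[OF q ab(2) ab(1)] ab unfolding E_def by auto
    then show "X = Y" using class_eq_iff[OF q ab(1) ab(2)] ab unfolding E_def by auto
  qed
qed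

lemma exU:
  assumes q: "quasiorder_on A \<gamma>"
  shows "\<exists>U. tpo A U \<and> \<gamma> \<subseteq> U \<and> (\<forall>a b. (a,b) \<in> U \<longrightarrow> (b,a) \<in> U \<longrightarrow> (a,b) \<in> \<gamma>)"
proof -
  define E where "E = \<gamma> \<inter> \<gamma>\<inverse>"
  obtain L where L: "linear_order_on' (A // E) L" "induced_order A \<gamma> \<subseteq> L"
    using szpilrajn[OF induced_po[OF q]] unfolding E_def by blast
  define U where "U = {(a,b). a \<in> A \<and> b \<in> A \<and> (E``{a}, E``{b}) \<in> L}"
  have cI: "E``{a} \<in> A // E" if "a \<in> A" for a using that by (rule quotientI)
  have "trans U"
    using L(1) unfolding U_def linear_order_on'_def trans_def by blast
  moreover have "\<gamma> \<subseteq> U"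
  proof
    fix ab assume "ab \<in> \<gamma>"
    moreover obtain a b where "ab = (a,b)" by (cases ab)
    ultimately show "ab \<in> U" using q induced_iff[OF q] L(2) unfolding U_def E_def quasiorder_on_def by blast
  qed
  moreover have "(a,b) \<in> \<gamma>" if "(a,b) \<in> U" "(b,a) \<in> U" for a b
  proof -
    have "a \<in> A" "b \<in> A" "E``{a} = E``{b}" using that L(1) unfolding U_def linear_order_on'_def antisym_def by auto
    then show ?thesis using class_eq_iff[OF q] unfolding E_def by auto
  qed
  moreover have "\<forall>a\<in>A. \<forall>b\<in>A. (a,b) \<in> U \<or> (b,a) \<in> U"
    using L(1) cI unfolding U_def linear_order_on'_def by blast
  moreover have "U \<subseteq> A \<times> A" unfolding U_def by auto
  ultimately have "tpo A U \<and> \<gamma> \<subseteq> U \<and> (\<forall>a b. (a,b) \<in> U \<longrightarrow> (b,a) \<in> U \<longrightarrow> (a,b) \<in> \<gamma>)"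
    unfolding tpo_def by blast
  then show ?thesis by blast
qed


theorem theorem2p13:
  fixes A :: "'a set" and \<gamma> :: "'a rel" and I :: "'i set" and \<alpha> :: "'i \<Rightarrow> 'a rel"
  assumes "quasiorder_on A \<gamma>"
    and "half_space_realizer A \<gamma> I \<alpha>"
    and "\<exists>i\<in>I. \<exists>j\<in>I. i \<noteq> j"
  shows "\<exists>R :: 'i \<Rightarrow> 'a set rel.
           (\<forall>i\<in>I. linear_extension (A // (\<gamma> \<inter> \<gamma>\<inverse>)) (induced_order A \<gamma>) (R i)) \<and>
           (\<Inter>i\<in>I. R i) = induced_order A \<gamma>"
proof -
  note q = assms(1)
  have hs: "\<And>i. i \<in> I \<Longrightarrow> half_space A (\<alpha> i)" and gI: "(\<Inter>i\<in>I. \<alpha> i) = \<gamma>"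
    using assms(2) unfolding half_space_realizer_def by auto
  obtain i1 i2 where i12: "i1 \<in> I" "i2 \<in> I" "i1 \<noteq> i2" using assms(3) by blast
  obtain U where U: "tpo A U" "\<gamma> \<subseteq> U" "\<And>a b. (a,b) \<in> U \<Longrightarrow> (b,a) \<in> U \<Longrightarrow> (a,b) \<in> \<gamma>"
    using exU[OF q] by blast
  have UA: "U \<subseteq> A \<times> A" using U(1) unfolding tpo_def by auto
  have Utot: "\<And>a b. a \<in> A \<Longrightarrow> b \<in> A \<Longrightarrow> (a,b) \<in> U \<or> (b,a) \<in> U" using U(1) unfolding tpo_def by auto
  define P1 where "P1 = lexr (Qr A (\<alpha> i1)) (sel (\<alpha> i1) U (lexr ((Qr A (\<alpha> i2))\<inverse>) U))"
  define Po where "Po i = lexr (Qr A (\<alpha> i)) (sel (\<alpha> i) (lexr (Qr A (\<alpha> i1)) (sel (\<alpha> i1) U (U\<inverse>)))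
                     (lexr ((Qr A (\<alpha> i1))\<inverse>) (U\<inverse>)))" for i
  define P where "P i = lexr (if i = i1 then P1 else Po i) U" for i
  have tP: "tpo A (P i)" if "i \<in> I" for i
  proof -
    have "tpo A P1" unfolding P1_def
      by (intro tpo_lex_sel tpo_lex tpo_conv tpo_Q hs i12 U(1))
    moreover have "tpo A (Po i)" unfolding Po_def
      by (intro tpo_lex_sel tpo_lex tpo_conv tpo_Q hs i12 U(1) that)
    ultimately show ?thesis unfolding P_def by (auto intro: tpo_lex U(1))
  qed
  have gP: "\<gamma> \<subseteq> P i" if "i \<in> I" for i
  proof
    fix ab assume ab: "ab \<in> \<gamma>"
    obtain a b where e: "ab = (a,b)" by (cases ab)
    have g: "(a,b) \<in> \<alpha> i" "(a,b) \<in> \<alpha> i1" "(a,b) \<in> U" using ab e gI that i12 U(2) by auto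
    have A: "a \<in> A" "b \<in> A" using ab e q unfolding quasiorder_on_def by auto
    show "ab \<in> P i" using g A e unfolding P_def P1_def Po_def lexr_def sel_def Qr_def by auto
  qed
  have aP: "(a,b) \<in> \<gamma>" if "(a,b) \<in> P i" "(b,a) \<in> P i" for i a b
    using that U(3) unfolding P_def lexr_def by auto
  have cov: "\<exists>i\<in>I. (a,b) \<notin> P i" if ab: "a \<in> A" "b \<in> A" "(a,b) \<notin> \<gamma>" for a b
  proof -
    obtain j where j: "j \<in> I" "(a,b) \<notin> \<alpha> j" using ab gI by blast
    have neq: "a \<noteq> b" using ab q unfolding quasiorder_on_def by auto
    have Ux: "(a,b) \<in> U \<longleftrightarrow> (b,a) \<notin> U" using Utot[OF ab(1,2)] U(3) ab(3) by blast
    have "(a,b) \<notin> P i1 \<or> (a,b) \<notin> P i2 \<or> (a,b) \<notin> P j"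
    proof (cases "j = i1")
      case True
      then show ?thesis using j Ux ab neq i12(3)
        unfolding P_def P1_def Po_def lexr_def sel_def Qr_def by auto
    next
      case False
      then show ?thesis using j Ux ab neq i12(3)
        unfolding P_def P1_def Po_def lexr_def sel_def Qr_def by auto
    qed
    then show ?thesis using i12 j by blast
  qed
  have "\<forall>i\<in>I. \<exists>R. linear_extension (A // (\<gamma> \<inter> \<gamma>\<inverse>)) (induced_order A \<gamma>) R \<and>
     (\<forall>a\<in>A. \<forall>b\<in>A. (a,b) \<notin> P i \<longrightarrow> ((\<gamma> \<inter> \<gamma>\<inverse>) `` {a}, (\<gamma> \<inter> \<gamma>\<inverse>) `` {b}) \<notin> R)"
  proof
    fix i assume i: "i \<in> I"
    show "\<exists>R. linear_extension (A // (\<gamma> \<inter> \<gamma>\<inverse>)) (induced_order A \<gamma>) R \<and>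
     (\<forall>a\<in>A. \<forall>b\<in>A. (a,b) \<notin> P i \<longrightarrow> ((\<gamma> \<inter> \<gamma>\<inverse>) `` {a}, (\<gamma> \<inter> \<gamma>\<inverse>) `` {b}) \<notin> R)"
      by (rule lift[OF q tP[OF i] gP[OF i] aP])
  qed
  then obtain R where R: "\<And>i. i \<in> I \<Longrightarrow> linear_extension (A // (\<gamma> \<inter> \<gamma>\<inverse>)) (induced_order A \<gamma>) (R i)"
    "\<And>i a b. i \<in> I \<Longrightarrow> a \<in> A \<Longrightarrow> b \<in> A \<Longrightarrow> (a,b) \<notin> P i \<Longrightarrow> ((\<gamma> \<inter> \<gamma>\<inverse>) `` {a}, (\<gamma> \<inter> \<gamma>\<inverse>) `` {b}) \<notin> R i"
    by metis
  have "(\<Inter>i\<in>I. R i) = induced_order A \<gamma>"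
  proof
    show "induced_order A \<gamma> \<subseteq> (\<Inter>i\<in>I. R i)" using R(1) unfolding linear_extension_def by blast
  next
    show "(\<Inter>i\<in>I. R i) \<subseteq> induced_order A \<gamma>"
    proof
      fix XY assume XY: "XY \<in> (\<Inter>i\<in>I. R i)"
      obtain X Y where e: "XY = (X,Y)" by (cases XY)
      have "(X,Y) \<in> R i1" using XY e i12 by auto
      then have "X \<in> A // (\<gamma> \<inter> \<gamma>\<inverse>)" "Y \<in> A // (\<gamma> \<inter> \<gamma>\<inverse>)"
        using R(1)[OF i12(1)] unfolding linear_extension_def linear_order_on'_def by auto
      then obtain a b where ab: "a \<in> A" "b \<in> A" "X = (\<gamma> \<inter> \<gamma>\<inverse>) `` {a}" "Y = (\<gamma> \<inter> \<gamma>\<inverse>) `` {b}"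
        by (metis quotientE)
      have "(a,b) \<in> \<gamma>"
      proof (rule ccontr)
        assume "(a,b) \<notin> \<gamma>"
        then obtain i where "i \<in> I" "(a,b) \<notin> P i" using cov ab by blast
        then have "(X,Y) \<notin> R i" using R(2) ab by auto
        then show False using XY e \<open>i \<in> I\<close> by auto
      qed
      then show "XY \<in> induced_order A \<gamma>" using induced_iff[OF q ab(1,2)] ab e by auto
    qed
  qed
  then show ?thesis using R(1) by blast
qed

end
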